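(* Let $X\subseteq\mathbb{R}^n$ be nonempty, closed, convex and bounded; let $F:X\to\mathbb{R}^n$ be $L_F$-Lipschitz continuous and monotone on $X$; let $H:X\to\mathbb{R}^n$ be $L_H$-Lipschitz continuous and monotone on $X$; and assume $\mathrm{SOL}(\mathrm{SOL}(X,F),H)\neq\emptyset$. Let $\gamma>0$ and let $\{\eta_k\}$ be a diminishing (nonincreasing) sequence of positive scalars with $\gamma^2(L_F^2+\eta_0^2L_H^2)\le0.5$. Let $x_0\in X$ and for $k\ge0$ set $y_{k+1}=\Pi_X[x_k-\gamma(F(x_k)+\eta_kH(x_k))]$, $x_{k+1}=\Pi_X[x_k-\gamma(F(y_{k+1})+\eta_kH(y_{k+1}))]$, and $\bar y_K=\frac1K\sum_{k=0}^{K-1}y_{k+1}$ for $K\ge1$. Then: (i) For all $K\ge1$, $-B_H\,\mathrm{dist}(\bar y_K,\mathrm{SOL}(X,F))\le\mathrm{Gap}(\bar y_K,\mathrm{SOL}(X,F),H)\le(\gamma\eta_{K-1}K)^{-1}D_X^2$. (ii) For all $K\ge1$, $0\le\mathrm{Gap}(\bar y_K,X,F)\le(\gamma K)^{-1}D_X^2+\sqrt2\,C_HD_XK^{-1}\sum_{k=0}^{K-1}\eta_k$. (iii) If $\lim_{k\to\infty}k\eta_{k-1}=\infty$ and $\lim_{k\to\infty}\frac1k\sum_{j=0}^{k-1}\eta_j=0$ (e.g., $\eta_k=(k+1)^{-b}$ with $0<b<1$), then every accumulation point of $\{\bar y_k\}$ belongs to $\mathrm{SOL}(\mathrm{SOL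}(X,F),H)$.
   Context: $\mathrm{SOL}(Y,G)=\{x\in Y: G(x)^\top(y-x)\ge0\ \forall y\in Y\}$. Dual gap: $\mathrm{Gap}(x,Y,G)=\sup_{y\in Y}G(y)^\top(x-y)$. $\Pi_X$ Euclidean projection; $\mathrm{dist}(x,Y)=\|x-\Pi_Y[x]\|$. $D_X^2=\sup_{x,y\in X}\frac12\|x-y\|^2$ ($D_X\ge0$), $B_H=\sup_{x\in\mathrm{SOL}(X,F)}\|H(x)\|$, $C_H=\sup_{x\in X}\|H(x)\|$. (The averaged iterate corresponds to the recursion $\bar y_{k+1}=(k\bar y_k+y_{k+1})/(k+1)$.) *)

theory Defs
  imports "HOL-Analysis.Analysis"
begin

definition SOL :: "'a::real_inner set \<Rightarrow> ('a \<Rightarrow> 'a) \<Rightarrow> 'a set" where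
  "SOL Y G = {x \<in> Y. \<forall>y\<in>Y. G x \<bullet> (y - x) \<ge> 0}"

definition Gap :: "'a::real_inner \<Rightarrow> 'a set \<Rightarrow> ('a \<Rightarrow> 'a) \<Rightarrow> real" where
  "Gap x Y G = (SUP y\<in>Y. G y \<bullet> (x - y))"

abbreviation proj :: "'a::euclidean_space set \<Rightarrow> 'a \<Rightarrow> 'a" where
  "proj Y x \<equiv> closest_point Y x"

definition pdist :: "'a::euclidean_space \<Rightarrow> 'a set \<Rightarrow> real" where
  "pdist x Y = norm (x - closest_point Y x)"

definition DX2 :: "'a::real_normed_vector set \<Rightarrow> real" where
  "DX2 X = (SUP p\<in>X \<times> X. (1/2) * (norm (fst p - snd p))\<^sup>2)"

definition DX :: "'a::real_normed_vector set \<Rightarrow> real" where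
  "DX X = sqrt (DX2 X)"

definition BH :: "'a::real_inner set \<Rightarrow> ('a \<Rightarrow> 'a) \<Rightarrow> ('a \<Rightarrow> 'a) \<Rightarrow> real" where
  "BH X F H = (SUP x\<in>SOL X F. norm (H x))"

definition CH :: "'a::real_normed_vector set \<Rightarrow> ('a \<Rightarrow> 'a) \<Rightarrow> real" where
  "CH X H = (SUP x\<in>X. norm (H x))"

definition monotone_op :: "'a::real_inner set \<Rightarrow> ('a \<Rightarrow> 'a) \<Rightarrow> bool" where
  "monotone_op X F \<longleftrightarrow> (\<forall>x\<in>X. \<forall>y\<in>X. (F x - F y) \<bullet> (x - y) \<ge> 0)"

end

theory Submission
  imports Defs
begin


lemma eg_step:
  fixes X :: "'a::euclidean_space set"
  assumes cl: "closed X" and cv: "convex X" and ne: "X \<noteq> {}" and w: "w \<in> X"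
    and y: "y = closest_point X (xk - \<gamma> *\<^sub>R g1)"
    and xp: "xp = closest_point X (xk - \<gamma> *\<^sub>R g2)"
    and lip: "norm (g2 - g1) \<le> L * norm (y - xk)"
    and gL: "\<gamma> * L \<le> 1" and g: "\<gamma> > 0" and L: "L \<ge> 0"
  shows "2 * \<gamma> * (g2 \<bullet> (y - w)) \<le> (norm (xk - w))\<^sup>2 - (norm (xp - w))\<^sup>2"
proof -
  have yX: "y \<in> X" and xpX: "xp \<in> X" using y xp closest_point_in_set[OF cl ne] by auto
  have P1: "(xk - \<gamma> *\<^sub>R g2 - xp) \<bullet> (w - xp) \<le> 0"
    using closest_point_dot[OF cv cl w] xp by simp
  have P2: "(xk - \<gamma> *\<^sub>R g1 - y) \<bullet> (xp - y) \<le> 0"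
    using closest_point_dot[OF cv cl xpX] y by simp
  define a where "a = norm (y - xk)"
  define b where "b = norm (y - xp)"
  have CS: "(g2 - g1) \<bullet> (y - xp) \<le> L * a * b"
  proof -
    have "(g2 - g1) \<bullet> (y - xp) \<le> norm (g2 - g1) * norm (y - xp)"
      by (simp add: norm_cauchy_schwarz)
    also have "\<dots> \<le> L * a * b" unfolding a_def b_def
      by (rule mult_right_mono[OF lip]) simp
    finally show ?thesis .
  qed
  have ab: "2 * \<gamma> * (L * a * b) \<le> a\<^sup>2 + b\<^sup>2"
  proof -
    have "2 * \<gamma> * (L * a * b) = (\<gamma> * L) * (2 * a * b)" by simp
    also have "\<dots> \<le> 1 * (2 * a * b)"
      by (rule mult_right_mono[OF gL]) (simp add: a_def b_def)
    also have "\<dots> \<le> a\<^sup>2 + b\<^sup>2" using sum_squares_bound[of a b] by simp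
    finally show ?thesis .
  qed
  have CS2: "2 * \<gamma> * ((g2 - g1) \<bullet> (y - xp)) \<le> a\<^sup>2 + b\<^sup>2"
    using CS ab g by (smt (verit) mult_left_mono)
  have an: "a\<^sup>2 = (y - xk) \<bullet> (y - xk)" "b\<^sup>2 = (y - xp) \<bullet> (y - xp)"
    unfolding a_def b_def by (simp_all add: power2_norm_eq_inner)
  have n1: "(norm (xk - w))\<^sup>2 = (xk - w) \<bullet> (xk - w)" "(norm (xp - w))\<^sup>2 = (xp - w) \<bullet> (xp - w)"
    by (simp_all add: power2_norm_eq_inner)
  show ?thesis
    using P1 P2 CS2 unfolding n1 an
    by (simp add: inner_diff_left inner_diff_right inner_commute algebra_simps)
qed

lemma minty:
  fixes C :: "'a::euclidean_space set"
  assumes cv: "convex C" and cont: "continuous_on C G" and p: "p \<in> C"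
    and h: "\<And>w. w \<in> C \<Longrightarrow> G w \<bullet> (w - p) \<ge> 0"
    and y: "y \<in> C"
  shows "G p \<bullet> (y - p) \<ge> 0"
proof -
  define z where "z n = p + (1 / real (Suc n)) *\<^sub>R (y - p)" for n
  have zC: "z n \<in> C" for n
  proof -
    have "z n = (1 - 1 / real (Suc n)) *\<^sub>R p + (1 / real (Suc n)) *\<^sub>R y"
      by (simp add: z_def algebra_simps)
    moreover have "(1 - 1 / real (Suc n)) *\<^sub>R p + (1 / real (Suc n)) *\<^sub>R y \<in> C"
      by (rule convexD[OF cv p y]) auto
    ultimately show ?thesis by simp
  qed
  have zt: "z \<longlonglongrightarrow> p"
  proof -
    have "(\<lambda>n. p + (1 / real (Suc n)) *\<^sub>R (y - p)) \<longlonglongrightarrow> p + 0 *\<^sub>R (y - p)"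
      by (intro tendsto_intros LIMSEQ_Suc[OF lim_const_over_n])
    then show ?thesis unfolding z_def[abs_def] by simp
  qed
  have "(\<lambda>n. G (z n)) \<longlonglongrightarrow> G p"
    using cont zC zt p unfolding continuous_on_sequentially comp_def by blast
  then have lim: "(\<lambda>n. G (z n) \<bullet> (y - p)) \<longlonglongrightarrow> G p \<bullet> (y - p)"
    by (intro tendsto_intros)
  have "G (z n) \<bullet> (y - p) \<ge> 0" for n
  proof -
    have "0 \<le> G (z n) \<bullet> (z n - p)" using h zC by blast
    also have "\<dots> = (1 / real (Suc n)) * (G (z n) \<bullet> (y - p))" by (simp add: z_def)
    finally show ?thesis by (simp add: zero_le_divide_iff add_pos_nonneg)
  qed
  then show ?thesis using LIMSEQ_le_const[OF lim] by blast
qed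

lemma SOL_minty:
  fixes X :: "'a::euclidean_space set"
  assumes cv: "convex X" and cont: "continuous_on X F" and mono: "monotone_op X F"
  shows "SOL X F = X \<inter> (\<Inter>w\<in>X. {x. F w \<bullet> x \<le> F w \<bullet> w})"
proof (rule equalityI)
  show "SOL X F \<subseteq> X \<inter> (\<Inter>w\<in>X. {x. F w \<bullet> x \<le> F w \<bullet> w})"
  proof
    fix x assume x: "x \<in> SOL X F"
    then have xX: "x \<in> X" by (simp add: SOL_def)
    have "F w \<bullet> x \<le> F w \<bullet> w" if w: "w \<in> X" for w
    proof -
      have "F x \<bullet> (w - x) \<ge> 0" using x w by (auto simp: SOL_def)
      moreover have "(F w - F x) \<bullet> (w - x) \<ge> 0" using mono w xX by (simp add: monotone_op_def)
      ultimately have "F w \<bullet> (w - x) \<ge> 0" by (simp add: inner_diff_left)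
      then show "F w \<bullet> x \<le> F w \<bullet> w" by (simp add: inner_diff_right)
    qed
    then show "x \<in> X \<inter> (\<Inter>w\<in>X. {x. F w \<bullet> x \<le> F w \<bullet> w})" using xX by blast
  qed
  show "X \<inter> (\<Inter>w\<in>X. {x. F w \<bullet> x \<le> F w \<bullet> w}) \<subseteq> SOL X F"
  proof
    fix x assume "x \<in> X \<inter> (\<Inter>w\<in>X. {x. F w \<bullet> x \<le> F w \<bullet> w})"
    then have xX: "x \<in> X" and h: "\<And>w. w \<in> X \<Longrightarrow> F w \<bullet> x \<le> F w \<bullet> w" by auto
    have "F x \<bullet> (y - x) \<ge> 0" if "y \<in> X" for y
      by (rule minty[OF cv cont xX _ that]) (use h in \<open>auto simp: inner_diff_right\<close>)
    then show "x \<in> SOL X F" using xX by (simp add: SOL_def)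
  qed
qed

lemma SOL_closed_convex:
  fixes X :: "'a::euclidean_space set"
  assumes cl: "closed X" and cv: "convex X" and cont: "continuous_on X F" and mono: "monotone_op X F"
  shows "closed (SOL X F)" "convex (SOL X F)"
  unfolding SOL_minty[OF cv cont mono]
  by (intro closed_Int cl closed_INT closed_halfspace_le allI ballI,
      intro convex_Int cv convex_INT convex_halfspace_le allI ballI)

lemma tele_dec:
  fixes d \<eta> :: "nat \<Rightarrow> real"
  assumes d: "\<And>k. 0 \<le> d k" "\<And>k. d k \<le> M" and ep: "\<And>k. \<eta> k > 0" and dec: "decseq \<eta>"
  shows "(\<Sum>k<Suc n. (d k - d (Suc k)) / \<eta> k) \<le> M / \<eta> n - d (Suc n) / \<eta> n"
proof (induction n)
  case 0
  then show ?case using d(2)[of 0] ep[of 0] by (simp add: divide_right_mono diff_divide_distrib)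
next
  case (Suc n)
  have "(M - d (Suc n)) / \<eta> n \<le> (M - d (Suc n)) / \<eta> (Suc n)"
    using d(2)[of "Suc n"] ep dec by (intro divide_left_mono) (auto simp: decseq_Suc_iff)
  then show ?case using Suc by (simp add: diff_divide_distrib)
qed

lemma avg_inner:
  fixes y :: "nat \<Rightarrow> 'a::real_inner"
  assumes K: "K \<ge> 1" and yb: "ybar = (1 / real K) *\<^sub>R (\<Sum>k<K. y (Suc k))"
  shows "v \<bullet> (ybar - w) = (1 / real K) * (\<Sum>k<K. v \<bullet> (y (Suc k) - w))"
proof -
  have "(\<Sum>k<K. v \<bullet> (y (Suc k) - w)) = v \<bullet> (\<Sum>k<K. y (Suc k)) - real K * (v \<bullet> w)"
    by (simp add: inner_diff_right sum_subtractf inner_sum_right)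
  then show ?thesis using K by (simp add: yb inner_diff_right field_simps)
qed



lemma neg_inner_le: "- (a \<bullet> b) \<le> norm a * norm (b::'a::real_inner)"
  using norm_cauchy_schwarz[of "-a" b] by simp

theorem theorem3p4:
  fixes X :: "'a::euclidean_space set"
    and F H :: "'a \<Rightarrow> 'a"
    and LF LH \<gamma> :: real
    and \<eta> :: "nat \<Rightarrow> real"
    and x y ybar :: "nat \<Rightarrow> 'a"
  assumes X_ne: "X \<noteq> {}" and X_closed: "closed X" and X_convex: "convex X"
    and X_bounded: "bounded X"
    and F_lip: "lipschitz_on LF X F" and F_mono: "monotone_op X F"
    and H_lip: "lipschitz_on LH X H" and H_mono: "monotone_op X H"
    and bilevel_ne: "SOL (SOL X F) H \<noteq> {}"
    and \<gamma>_pos: "\<gamma> > 0"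
    and \<eta>_pos: "\<And>k. \<eta> k > 0" and \<eta>_dec: "decseq \<eta>"
    and step: "\<gamma>\<^sup>2 * (LF\<^sup>2 + (\<eta> 0)\<^sup>2 * LH\<^sup>2) \<le> 1/2"
    and x0: "x 0 \<in> X"
    and y_step: "\<And>k. y (Suc k) = proj X (x k - \<gamma> *\<^sub>R (F (x k) + \<eta> k *\<^sub>R H (x k)))"
    and x_step: "\<And>k. x (Suc k) = proj X (x k - \<gamma> *\<^sub>R (F (y (Suc k)) + \<eta> k *\<^sub>R H (y (Suc k))))"
    and ybar_def: "\<And>K. ybar K = (1 / real K) *\<^sub>R (\<Sum>k<K. y (Suc k))"
  shows
    "(\<forall>K\<ge>1. - BH X F H * pdist (ybar K) (SOL X F) \<le> Gap (ybar K) (SOL X F) H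
              \<and> Gap (ybar K) (SOL X F) H \<le> DX2 X / (\<gamma> * \<eta> (K - 1) * real K))
     \<and> (\<forall>K\<ge>1. 0 \<le> Gap (ybar K) X F
              \<and> Gap (ybar K) X F \<le> DX2 X / (\<gamma> * real K)
                   + sqrt 2 * CH X H * DX X * (1 / real K) * (\<Sum>k<K. \<eta> k))
     \<and> ((filterlim (\<lambda>k. real k * \<eta> (k - 1)) at_top sequentially
          \<and> (\<lambda>k. (1 / real k) * (\<Sum>j<k. \<eta> j)) \<longlonglongrightarrow> 0)
        \<longrightarrow> (\<forall>p r. strict_mono r \<and> (ybar \<circ> r) \<longlonglongrightarrow> p \<longrightarrow> p \<in> SOL (SOL X F) H))"
proof -
  have LF0: "LF \<ge> 0" using F_lip by (rule lipschitz_on_nonneg)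
  have LH0: "LH \<ge> 0" using H_lip by (rule lipschitz_on_nonneg)
  have contF: "continuous_on X F" using F_lip by (rule lipschitz_on_continuous_on)
  have contH: "continuous_on X H" using H_lip by (rule lipschitz_on_continuous_on)
  have cpt: "compact X" using X_closed X_bounded by (simp add: compact_eq_bounded_closed)
  obtain B where B: "\<And>a. a \<in> X \<Longrightarrow> norm a \<le> B" using X_bounded unfolding bounded_iff by blast
  have xX: "x k \<in> X" for k
    by (cases k) (simp_all add: x0 x_step closest_point_in_set[OF X_closed X_ne])
  have yX: "y (Suc k) \<in> X" for k
    by (simp add: y_step closest_point_in_set[OF X_closed X_ne])
  have ybX: "ybar K \<in> X" if K: "K \<ge> 1" for K
  proof -
    have "ybar K = (\<Sum>k<K. (1 / real K) *\<^sub>R y (Suc k))"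
      by (simp add: ybar_def scaleR_sum_right)
    also have "\<dots> \<in> X"
      by (rule convex_sum[OF _ X_convex]) (use K yX in auto)
    finally show ?thesis .
  qed
  have bddD: "bdd_above ((\<lambda>p. (1/2) * (norm (fst p - snd p))\<^sup>2) ` (X \<times> X))"
  proof (rule bdd_aboveI2)
    fix p assume p: "p \<in> X \<times> X"
    have "norm (fst p - snd p) \<le> norm (fst p) + norm (snd p)" by (rule norm_triangle_ineq4)
    also have "\<dots> \<le> 2 * B"
    proof -
      have "fst p \<in> X" "snd p \<in> X" using p by (auto simp: mem_Times_iff)
      then show ?thesis using B[of "fst p"] B[of "snd p"] by linarith
    qed
    finally have "(norm (fst p - snd p))\<^sup>2 \<le> (2 * B)\<^sup>2" by (intro power_mono) auto
    then show "(1/2) * (norm (fst p - snd p))\<^sup>2 \<le> 2 * B\<^sup>2" by (simp add: power_mult_distrib)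
  qed
  have Dn: "(norm (a - b))\<^sup>2 \<le> 2 * DX2 X" if "a \<in> X" "b \<in> X" for a b
  proof -
    have "(1/2) * (norm (fst (a,b) - snd (a,b)))\<^sup>2 \<le> DX2 X"
      unfolding DX2_def by (rule cSUP_upper[OF _ bddD]) (use that in auto)
    then show ?thesis by simp
  qed
  obtain a0 where a0: "a0 \<in> X" using X_ne by blast
  have D0: "0 \<le> DX2 X" using Dn[OF a0 a0] by simp
  have Dn1: "norm (a - b) \<le> sqrt 2 * DX X" if "a \<in> X" "b \<in> X" for a b
  proof -
    have "norm (a - b) = sqrt ((norm (a - b))\<^sup>2)" by simp
    also have "\<dots> \<le> sqrt (2 * DX2 X)" using Dn[OF that] by (rule real_sqrt_le_mono)
    also have "\<dots> = sqrt 2 * DX X" by (simp add: DX_def real_sqrt_mult)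
    finally show ?thesis .
  qed
  have DX0: "0 \<le> DX X" by (simp add: DX_def D0)
  obtain CB where CB: "\<And>z. z \<in> H ` X \<Longrightarrow> norm z \<le> CB"
    using compact_imp_bounded[OF compact_continuous_image[OF contH cpt]] unfolding bounded_iff by blast
  have CHb: "norm (H a) \<le> CH X H" if "a \<in> X" for a
    unfolding CH_def by (rule cSUP_upper[OF that bdd_aboveI2[of _ _ CB]]) (use CB in auto)
  have CH0: "0 \<le> CH X H" using CHb[OF a0] norm_ge_zero order_trans by blast
  have SOLX: "SOL X F \<subseteq> X" by (auto simp: SOL_def)
  have BHb: "norm (H a) \<le> BH X F H" if "a \<in> SOL X F" for a
    unfolding BH_def by (rule cSUP_upper[OF that bdd_aboveI2[of _ _ CB]]) (use CB SOLX in auto)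
  have SOLcc: "closed (SOL X F)" "convex (SOL X F)"
    using SOL_closed_convex[OF X_closed X_convex contF F_mono] by auto
  have SOLne: "SOL X F \<noteq> {}" using bilevel_ne by (auto simp: SOL_def)
  have key: "2 * \<gamma> * ((F (y (Suc k)) + \<eta> k *\<^sub>R H (y (Suc k))) \<bullet> (y (Suc k) - w))
      \<le> (norm (x k - w))\<^sup>2 - (norm (x (Suc k) - w))\<^sup>2" if w: "w \<in> X" for w k
  proof (rule eg_step[OF X_closed X_convex X_ne w y_step x_step])
    have ek: "0 < \<eta> k" "\<eta> k \<le> \<eta> 0" using \<eta>_pos decseqD[OF \<eta>_dec, of 0 k] by auto
    show "norm (F (y (Suc k)) + \<eta> k *\<^sub>R H (y (Suc k)) - (F (x k) + \<eta> k *\<^sub>R H (x k)))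
        \<le> (LF + \<eta> k * LH) * norm (y (Suc k) - x k)"
    proof -
      have "norm (F (y (Suc k)) + \<eta> k *\<^sub>R H (y (Suc k)) - (F (x k) + \<eta> k *\<^sub>R H (x k)))
          = norm ((F (y (Suc k)) - F (x k)) + \<eta> k *\<^sub>R (H (y (Suc k)) - H (x k)))"
        by (simp add: algebra_simps)
      also have "\<dots> \<le> norm (F (y (Suc k)) - F (x k)) + \<eta> k * norm (H (y (Suc k)) - H (x k))"
        using ek by (metis abs_of_pos norm_scaleR norm_triangle_ineq)
      also have "\<dots> \<le> LF * norm (y (Suc k) - x k) + \<eta> k * (LH * norm (y (Suc k) - x k))"
        using lipschitz_on_normD[OF F_lip yX xX] lipschitz_on_normD[OF H_lip yX xX] ek
        by (intro add_mono mult_left_mono) auto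
      finally show ?thesis by (simp add: algebra_simps)
    qed
    have "(\<gamma> * (LF + \<eta> k * LH))\<^sup>2 \<le> 1\<^sup>2"
    proof -
      have "(\<eta> k)\<^sup>2 \<le> (\<eta> 0)\<^sup>2" using ek by (intro power_mono) auto
      then have "(\<eta> k)\<^sup>2 * LH\<^sup>2 \<le> (\<eta> 0)\<^sup>2 * LH\<^sup>2" by (simp add: mult_right_mono)
      moreover have "(LF + \<eta> k * LH)\<^sup>2 \<le> 2 * (LF\<^sup>2 + (\<eta> k)\<^sup>2 * LH\<^sup>2)"
        using sum_squares_bound[of LF "\<eta> k * LH"] by (simp add: power2_sum power_mult_distrib algebra_simps)
      ultimately have "(LF + \<eta> k * LH)\<^sup>2 \<le> 2 * (LF\<^sup>2 + (\<eta> 0)\<^sup>2 * LH\<^sup>2)" by (smt (verit))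
      then have "\<gamma>\<^sup>2 * (LF + \<eta> k * LH)\<^sup>2 \<le> \<gamma>\<^sup>2 * (2 * (LF\<^sup>2 + (\<eta> 0)\<^sup>2 * LH\<^sup>2))"
        by (simp add: mult_left_mono)
      also have "\<dots> \<le> 1" using step by (simp add: algebra_simps)
      finally show ?thesis by (simp add: power_mult_distrib)
    qed
    then show "\<gamma> * (LF + \<eta> k * LH) \<le> 1" by (rule power2_le_imp_le) simp
    show "0 < \<gamma>" by (rule \<gamma>_pos)
    show "0 \<le> LF + \<eta> k * LH" using LF0 LH0 ek by simp
  qed
  have boundA: "H w \<bullet> (ybar K - w) \<le> DX2 X / (\<gamma> * \<eta> (K - 1) * real K)"
    if w: "w \<in> SOL X F" and K: "K \<ge> 1" for w K
  proof -
    obtain n where n: "K = Suc n" using K by (cases K) auto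
    have wX: "w \<in> X" using w SOLX by blast
    define d where "d k = (norm (x k - w))\<^sup>2" for k
    have dst: "H w \<bullet> (y (Suc k) - w) \<le> (1 / (2 * \<gamma>)) * ((d k - d (Suc k)) / \<eta> k)" for k
    proof -
      have ek: "\<eta> k > 0" by (rule \<eta>_pos)
      have "F w \<bullet> (y (Suc k) - w) \<ge> 0" using w yX by (auto simp: SOL_def)
      moreover have "(F (y (Suc k)) - F w) \<bullet> (y (Suc k) - w) \<ge> 0"
        using F_mono yX wX by (simp add: monotone_op_def)
      ultimately have Fy: "F (y (Suc k)) \<bullet> (y (Suc k) - w) \<ge> 0" by (simp add: inner_diff_left)
      have "(H (y (Suc k)) - H w) \<bullet> (y (Suc k) - w) \<ge> 0"
        using H_mono yX wX by (simp add: monotone_op_def)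
      then have Hy: "H w \<bullet> (y (Suc k) - w) \<le> H (y (Suc k)) \<bullet> (y (Suc k) - w)"
        by (simp add: inner_diff_left)
      have "2 * \<gamma> * (F (y (Suc k)) \<bullet> (y (Suc k) - w) + \<eta> k * (H (y (Suc k)) \<bullet> (y (Suc k) - w)))
          \<le> d k - d (Suc k)" using key[OF wX, of k] by (simp add: d_def inner_add_left)
      then have "2 * \<gamma> * (\<eta> k * (H (y (Suc k)) \<bullet> (y (Suc k) - w))) \<le> d k - d (Suc k)"
        using Fy \<gamma>_pos by (smt (verit) mult_nonneg_nonneg distrib_left)
      then have "2 * \<gamma> * (\<eta> k * (H w \<bullet> (y (Suc k) - w))) \<le> d k - d (Suc k)"
        using Hy \<gamma>_pos ek by (smt (verit) mult_left_mono mult_pos_pos)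
      then show ?thesis using \<gamma>_pos ek by (simp add: field_simps)
    qed
    have sumb: "(\<Sum>k<K. H w \<bullet> (y (Suc k) - w)) \<le> (1 / (2 * \<gamma>)) * (2 * DX2 X / \<eta> n)"
    proof -
      have "(\<Sum>k<K. H w \<bullet> (y (Suc k) - w)) \<le> (\<Sum>k<K. (1 / (2 * \<gamma>)) * ((d k - d (Suc k)) / \<eta> k))"
        by (rule sum_mono) (rule dst)
      also have "\<dots> = (1 / (2 * \<gamma>)) * (\<Sum>k<Suc n. (d k - d (Suc k)) / \<eta> k)"
        by (simp only: n sum_distrib_left)
      also have "\<dots> \<le> (1 / (2 * \<gamma>)) * (2 * DX2 X / \<eta> n - d (Suc n) / \<eta> n)"
        using \<gamma>_pos
        by (intro mult_left_mono tele_dec[OF _ _ \<eta>_pos \<eta>_dec]) (auto simp: d_def Dn xX wX)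
      also have "\<dots> \<le> (1 / (2 * \<gamma>)) * (2 * DX2 X / \<eta> n)"
        using \<gamma>_pos \<eta>_pos[of n] by (intro mult_left_mono) (auto simp: d_def)
      finally show ?thesis .
    qed
    have "H w \<bullet> (ybar K - w) = (1 / real K) * (\<Sum>k<K. H w \<bullet> (y (Suc k) - w))"
      by (rule avg_inner[OF K ybar_def])
    also have "\<dots> \<le> (1 / real K) * ((1 / (2 * \<gamma>)) * (2 * DX2 X / \<eta> n))"
      by (rule mult_left_mono[OF sumb]) simp
    also have "\<dots> = DX2 X / (\<gamma> * \<eta> (K - 1) * real K)" by (simp add: n field_simps)
    finally show ?thesis .
  qed
  define S where "S = sqrt 2 * CH X H * DX X"
  have S0: "S \<ge> 0" using CH0 DX0 by (simp add: S_def)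
  have boundB: "F w \<bullet> (ybar K - w) \<le> DX2 X / (\<gamma> * real K)
                   + sqrt 2 * CH X H * DX X * (1 / real K) * (\<Sum>k<K. \<eta> k)"
    if wX: "w \<in> X" and K: "K \<ge> 1" for w K
  proof -
    define d where "d k = (norm (x k - w))\<^sup>2" for k
    have dst: "2 * \<gamma> * (F w \<bullet> (y (Suc k) - w)) \<le> d k - d (Suc k) + 2 * \<gamma> * (\<eta> k * S)" for k
    proof -
      have ek: "\<eta> k > 0" by (rule \<eta>_pos)
      have "(F (y (Suc k)) - F w) \<bullet> (y (Suc k) - w) \<ge> 0"
        using F_mono yX wX by (simp add: monotone_op_def)
      then have Fy: "F w \<bullet> (y (Suc k) - w) \<le> F (y (Suc k)) \<bullet> (y (Suc k) - w)"
        by (simp add: inner_diff_left)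
      have "- (H (y (Suc k)) \<bullet> (y (Suc k) - w)) \<le> norm (H (y (Suc k))) * norm (y (Suc k) - w)"
        by (rule neg_inner_le)
      also have "\<dots> \<le> CH X H * (sqrt 2 * DX X)"
        using CHb[OF yX] Dn1[OF yX wX] CH0 by (intro mult_mono) auto
      finally have Hy: "- (H (y (Suc k)) \<bullet> (y (Suc k) - w)) \<le> S" by (simp add: S_def mult_ac)
      have "2 * \<gamma> * (F (y (Suc k)) \<bullet> (y (Suc k) - w) + \<eta> k * (H (y (Suc k)) \<bullet> (y (Suc k) - w)))
          \<le> d k - d (Suc k)" using key[OF wX, of k] by (simp add: d_def inner_add_left)
      moreover have "- (\<eta> k * (H (y (Suc k)) \<bullet> (y (Suc k) - w))) \<le> \<eta> k * S"
        using Hy ek by (smt (verit) mult_left_mono mult_minus_right)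
      moreover have "2 * \<gamma> * (F w \<bullet> (y (Suc k) - w)) \<le> 2 * \<gamma> * (F (y (Suc k)) \<bullet> (y (Suc k) - w))"
        using Fy \<gamma>_pos by simp
      ultimately show ?thesis using \<gamma>_pos
        by (smt (verit) distrib_left mult_left_mono)
    qed
    have "2 * \<gamma> * (\<Sum>k<K. F w \<bullet> (y (Suc k) - w)) = (\<Sum>k<K. 2 * \<gamma> * (F w \<bullet> (y (Suc k) - w)))"
      by (simp add: sum_distrib_left)
    also have "\<dots> \<le> (\<Sum>k<K. (d k - d (Suc k)) + 2 * \<gamma> * (\<eta> k * S))"
      by (rule sum_mono) (rule dst)
    also have "\<dots> = d 0 - d K + 2 * \<gamma> * S * (\<Sum>k<K. \<eta> k)"
      by (simp add: sum.distrib sum_lessThan_telescope' sum_distrib_left sum_distrib_right mult_ac)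
    also have "\<dots> \<le> 2 * DX2 X + 2 * \<gamma> * S * (\<Sum>k<K. \<eta> k)"
      using Dn[OF xX[of 0] wX] zero_le_power2[of "norm (x K - w)"] unfolding d_def by linarith
    finally have sumb: "2 * \<gamma> * (\<Sum>k<K. F w \<bullet> (y (Suc k) - w)) \<le> 2 * DX2 X + 2 * \<gamma> * S * (\<Sum>k<K. \<eta> k)" .
    then have sumb2: "(\<Sum>k<K. F w \<bullet> (y (Suc k) - w)) \<le> DX2 X / \<gamma> + S * (\<Sum>k<K. \<eta> k)"
      using \<gamma>_pos by (simp add: field_simps)
    have "F w \<bullet> (ybar K - w) = (1 / real K) * (\<Sum>k<K. F w \<bullet> (y (Suc k) - w))"
      by (rule avg_inner[OF K ybar_def])
    also have "\<dots> \<le> (1 / real K) * (DX2 X / \<gamma> + S * (\<Sum>k<K. \<eta> k))"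
      by (rule mult_left_mono[OF sumb2]) simp
    also have "\<dots> = DX2 X / (\<gamma> * real K) + sqrt 2 * CH X H * DX X * (1 / real K) * (\<Sum>k<K. \<eta> k)"
      using \<gamma>_pos K by (simp add: S_def field_simps)
    finally show ?thesis .
  qed
  have bddA: "bdd_above ((\<lambda>w. H w \<bullet> (ybar K - w)) ` SOL X F)" if "K \<ge> 1" for K
    by (rule bdd_aboveI2[OF boundA[OF _ that]])
  have bddB: "bdd_above ((\<lambda>w. F w \<bullet> (ybar K - w)) ` X)" if "K \<ge> 1" for K
    by (rule bdd_aboveI2[OF boundB[OF _ that]])
  have part1: "\<forall>K\<ge>1. - BH X F H * pdist (ybar K) (SOL X F) \<le> Gap (ybar K) (SOL X F) H
              \<and> Gap (ybar K) (SOL X F) H \<le> DX2 X / (\<gamma> * \<eta> (K - 1) * real K)"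
  proof (intro allI impI conjI)
    fix K :: nat assume K: "K \<ge> 1"
    show "Gap (ybar K) (SOL X F) H \<le> DX2 X / (\<gamma> * \<eta> (K - 1) * real K)"
      unfolding Gap_def by (rule cSUP_least[OF SOLne boundA[OF _ K]])
    define q where "q = closest_point (SOL X F) (ybar K)"
    have q: "q \<in> SOL X F" unfolding q_def by (rule closest_point_in_set[OF SOLcc(1) SOLne])
    have "- BH X F H * pdist (ybar K) (SOL X F) \<le> - (norm (H q) * norm (ybar K - q))"
      unfolding pdist_def q_def[symmetric] using BHb[OF q] by (simp add: mult_right_mono)
    also have "\<dots> \<le> H q \<bullet> (ybar K - q)" using neg_inner_le[of "H q" "ybar K - q"] by linarith
    also have "\<dots> \<le> Gap (ybar K) (SOL X F) H"
      unfolding Gap_def by (rule cSUP_upper[OF q bddA[OF K]])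
    finally show "- BH X F H * pdist (ybar K) (SOL X F) \<le> Gap (ybar K) (SOL X F) H" .
  qed
  have part2: "\<forall>K\<ge>1. 0 \<le> Gap (ybar K) X F
              \<and> Gap (ybar K) X F \<le> DX2 X / (\<gamma> * real K)
                   + sqrt 2 * CH X H * DX X * (1 / real K) * (\<Sum>k<K. \<eta> k)"
  proof (intro allI impI conjI)
    fix K :: nat assume K: "K \<ge> 1"
    show "Gap (ybar K) X F \<le> DX2 X / (\<gamma> * real K)
                   + sqrt 2 * CH X H * DX X * (1 / real K) * (\<Sum>k<K. \<eta> k)"
      unfolding Gap_def by (rule cSUP_least[OF X_ne boundB[OF _ K]])
    have "0 = F (ybar K) \<bullet> (ybar K - ybar K)" by simp
    also have "\<dots> \<le> Gap (ybar K) X F"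
      unfolding Gap_def by (rule cSUP_upper[OF ybX[OF K] bddB[OF K]])
    finally show "0 \<le> Gap (ybar K) X F" .
  qed
  have part3: "(filterlim (\<lambda>k. real k * \<eta> (k - 1)) at_top sequentially
          \<and> (\<lambda>k. (1 / real k) * (\<Sum>j<k. \<eta> j)) \<longlonglongrightarrow> 0)
        \<longrightarrow> (\<forall>p r. strict_mono r \<and> (ybar \<circ> r) \<longlonglongrightarrow> p \<longrightarrow> p \<in> SOL (SOL X F) H)"
  proof (intro impI allI, elim conjE)
    fix p and r :: "nat \<Rightarrow> nat"
    assume lim1: "filterlim (\<lambda>k. real k * \<eta> (k - 1)) at_top sequentially"
      and lim2: "(\<lambda>k. (1 / real k) * (\<Sum>j<k. \<eta> j)) \<longlonglongrightarrow> 0"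
      and r: "strict_mono r" and conv: "(ybar \<circ> r) \<longlonglongrightarrow> p"
    have ev: "eventually (\<lambda>n. r n \<ge> 1) sequentially"
      using seq_suble[OF r] by (intro eventually_sequentiallyI[of 1]) (metis order_trans)
    have conv': "(\<lambda>n. ybar (r n)) \<longlonglongrightarrow> p" using conv by (simp add: comp_def)
    have pX: "p \<in> X"
      by (rule Lim_in_closed_set[OF X_closed _ trivial_limit_sequentially conv'])
         (use ev ybX in \<open>auto elim: eventually_mono\<close>)
    define bB where "bB K = DX2 X / (\<gamma> * real K) + sqrt 2 * CH X H * DX X * (1 / real K) * (\<Sum>k<K. \<eta> k)" for K
    have bB0: "bB \<longlonglongrightarrow> 0"
    proof -
      have "(\<lambda>K. DX2 X / \<gamma> / real K + S * ((1 / real K) * (\<Sum>k<K. \<eta> k))) \<longlonglongrightarrow> 0 + S * 0"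
        by (intro tendsto_intros lim_const_over_n lim2)
      moreover have "bB = (\<lambda>K. DX2 X / \<gamma> / real K + S * ((1 / real K) * (\<Sum>k<K. \<eta> k)))"
        by (auto simp: bB_def S_def fun_eq_iff mult_ac)
      ultimately show ?thesis by simp
    qed
    have bBr: "(\<lambda>n. bB (r n)) \<longlonglongrightarrow> 0" using LIMSEQ_subseq_LIMSEQ[OF bB0 r] by (simp add: comp_def)
    have Fle: "F w \<bullet> (w - p) \<ge> 0" if w: "w \<in> X" for w
    proof -
      have l: "(\<lambda>n. F w \<bullet> (ybar (r n) - w)) \<longlonglongrightarrow> F w \<bullet> (p - w)"
        by (intro tendsto_intros conv')
      have "F w \<bullet> (p - w) \<le> 0"
        by (rule tendsto_le[OF trivial_limit_sequentially bBr l])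
           (use ev in \<open>auto elim!: eventually_mono intro: boundB[OF w, folded bB_def]\<close>)
      then show ?thesis by (simp add: inner_diff_right)
    qed
    have pS: "p \<in> SOL X F"
      using minty[OF X_convex contF pX Fle] pX by (auto simp: SOL_def)
    define cA where "cA K = DX2 X / (\<gamma> * \<eta> (K - 1) * real K)" for K
    have cA0: "cA \<longlonglongrightarrow> 0"
    proof -
      have "(\<lambda>K. DX2 X / \<gamma> * inverse (real K * \<eta> (K - 1))) \<longlonglongrightarrow> DX2 X / \<gamma> * 0"
        by (intro tendsto_intros tendsto_inverse_0_at_top lim1)
      moreover have "cA = (\<lambda>K. DX2 X / \<gamma> * inverse (real K * \<eta> (K - 1)))"
        by (auto simp: cA_def fun_eq_iff divide_inverse inverse_mult_distrib mult_ac)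
      ultimately show ?thesis by simp
    qed
    have cAr: "(\<lambda>n. cA (r n)) \<longlonglongrightarrow> 0" using LIMSEQ_subseq_LIMSEQ[OF cA0 r] by (simp add: comp_def)
    have Hle: "H w \<bullet> (w - p) \<ge> 0" if w: "w \<in> SOL X F" for w
    proof -
      have l: "(\<lambda>n. H w \<bullet> (ybar (r n) - w)) \<longlonglongrightarrow> H w \<bullet> (p - w)"
        by (intro tendsto_intros conv')
      have "H w \<bullet> (p - w) \<le> 0"
        by (rule tendsto_le[OF trivial_limit_sequentially cAr l])
           (use ev in \<open>auto elim!: eventually_mono intro: boundA[OF w, folded cA_def]\<close>)
      then show ?thesis by (simp add: inner_diff_right)
    qed
    have contH': "continuous_on (SOL X F) H" by (rule continuous_on_subset[OF contH SOLX])
    show "p \<in> SOL (SOL X F) H"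
      using minty[OF SOLcc(2) contH' pS Hle] pS by (auto simp: SOL_def[of "SOL X F"])
  qed
  show ?thesis using part1 part2 part3 by blast
qed
end
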